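(* Let $A\in\mathbb F^{n\times n}$ be Lyapunov regular and $B\in\{A\}''_{\mathbb F}$. Then the matricization $L_{A,B}\in\mathbb F^{n^2\times n^2}$ of $\mathcal L_{A,B}$ belongs to $\overline{\{A^*\}''_{\mathbb F}}\otimes\{A^*\}''_{\mathbb F}$ (the span of Kronecker products $\bar X\otimes Y$ with $X,Y\in\{A^*\}''_{\mathbb F}$).
   Context: $\mathbb F=\mathbb R$ or $\mathbb C$; $Y^*$ is conjugate transpose; $\bar X$ is entrywise complex conjugate. $A$ is Lyapunov regular if its eigenvalues satisfy $\lambda_i+\bar\lambda_j\ne0$ for all $i,j$. $\mathcal L_Y(X)=XY+Y^*X$, and $\mathcal L_{A,B}=\mathcal L_B\circ\mathcal L_A^{-1}$. $\{A\}''_{\mathbb F}$ is the bicommutant of $A$ in $\mathbb F^{n\times n}$. The matricization of a linear map $\mathcal L:\mathbb F^{q\times q}\to\mathbb F^{n\times n}$ is the matrix $L\in\mathbb F^{n^2\times q^2}$ with $L\,\mathrm{vec}(V)=\mathrm{vec}(\mathcal L(V))$, where $\mathrm{vec}$ stacks columns. *)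

theory Defs
  imports "Jordan_Normal_Form.Char_Poly" "Jordan_Normal_Form.Conjugate"
begin

definition mconj :: "'a::conjugatable_field mat \<Rightarrow> 'a mat" where
  "mconj X = mat (dim_row X) (dim_col X) (\<lambda>(i,j). conjugate (X $$ (i,j)))"

definition madj :: "'a::conjugatable_field mat \<Rightarrow> 'a mat" where
  "madj X = mat (dim_col X) (dim_row X) (\<lambda>(i,j). conjugate (X $$ (j,i)))"

text \<open>Lyapunov regularity of a complex matrix: all eigenvalues satisfy
  lambda_i + conj(lambda_j) ~= 0.  A real matrix is Lyapunov regular iff
  its complexification is.\<close>
definition lyap_regular :: "complex mat \<Rightarrow> bool" where
  "lyap_regular A \<longleftrightarrow> (\<forall>l m. eigenvalue A l \<and> eigenvalue A m \<longrightarrow> l + cnj m \<noteq> 0)"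

definition lyap :: "'a::conjugatable_field mat \<Rightarrow> 'a mat \<Rightarrow> 'a mat" where
  "lyap Y X = X * Y + madj Y * X"

definition lyapAB :: "'a::conjugatable_field mat \<Rightarrow> 'a mat \<Rightarrow> 'a mat \<Rightarrow> 'a mat" where
  "lyapAB A B V = lyap B (THE X. X \<in> carrier_mat (dim_row A) (dim_row A) \<and> lyap A X = V)"

definition vecm :: "'a mat \<Rightarrow> 'a vec" where
  "vecm V = vec (dim_row V * dim_col V) (\<lambda>k. V $$ (k mod dim_row V, k div dim_row V))"

definition kron :: "'a::times mat \<Rightarrow> 'a mat \<Rightarrow> 'a mat" where
  "kron X Y = mat (dim_row X * dim_row Y) (dim_col X * dim_col Y)
     (\<lambda>(i,j). X $$ (i div dim_row Y, j div dim_col Y) * Y $$ (i mod dim_row Y, j mod dim_col Y))"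

definition commutant :: "nat \<Rightarrow> 'a::semiring_1 mat set \<Rightarrow> 'a mat set" where
  "commutant n S = {X \<in> carrier_mat n n. \<forall>Y\<in>S. X * Y = Y * X}"

definition bicommutant :: "nat \<Rightarrow> 'a::semiring_1 mat \<Rightarrow> 'a mat set" where
  "bicommutant n A = commutant n (commutant n {A})"

inductive_set kron_span :: "nat \<Rightarrow> 'a::conjugatable_field mat set \<Rightarrow> 'a mat set"
  for n S where
  zero: "0\<^sub>m (n*n) (n*n) \<in> kron_span n S"
| step: "M \<in> kron_span n S \<Longrightarrow> X \<in> S \<Longrightarrow> Y \<in> S \<Longrightarrow>
         c \<cdot>\<^sub>m kron (mconj X) Y + M \<in> kron_span n S"

definition matricization_in_span :: "nat \<Rightarrow> 'a::conjugatable_field mat \<Rightarrow> 'a mat \<Rightarrow> bool" where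
  "matricization_in_span n A B \<longleftrightarrow>
     (\<forall>L \<in> carrier_mat (n*n) (n*n).
        (\<forall>V \<in> carrier_mat n n. L *\<^sub>v vecm V = vecm (lyapAB A B V))
        \<longrightarrow> L \<in> kron_span n (bicommutant n (madj A)))"

end

theory Submission
  imports Defs "Jordan_Normal_Form.Schur_Decomposition"
begin

lemma sum_split_nn:
  fixes f :: "nat \<Rightarrow> 'b::comm_monoid_add"
  shows "(\<Sum>k\<in>{0..<m*n}. f k) = (\<Sum>a\<in>{0..<m}. \<Sum>b\<in>{0..<n}. f (a*n+b))"
proof -
  have "(\<Sum>a\<in>{0..<m}. \<Sum>b\<in>{0..<n}. f (a*n+b)) = (\<Sum>(a,b)\<in>{0..<m}\<times>{0..<n}. f (a*n+b))"
    by (simp add: sum.cartesian_product)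
  also have "\<dots> = (\<Sum>k\<in>{0..<m*n}. f k)"
  proof (rule sum.reindex_bij_witness[where i = "\<lambda>k. (k div n, k mod n)" and j = "\<lambda>(a,b). a*n+b"])
    fix ab assume ab: "ab \<in> {0..<m} \<times> {0..<n}"
    obtain a b where [simp]: "ab = (a,b)" by (cases ab)
    from ab have a: "a < m" and b: "b < n" by auto
    show "((case ab of (a, b) \<Rightarrow> a * n + b) div n, (case ab of (a, b) \<Rightarrow> a * n + b) mod n) = ab"
      using b by auto
    have "a*n+b < a*n+n" using b by simp
    also have "\<dots> \<le> m*n" using a by (metis add.commute mult_Suc less_eq_Suc_le mult_le_mono1)
    finally show "(case ab of (a, b) \<Rightarrow> a * n + b) \<in> {0..<m*n}" by simp
    show "f (case ab of (a, b) \<Rightarrow> a * n + b) = (case ab of (a, b) \<Rightarrow> f (a * n + b))" by simp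
  next
    fix k assume k: "k \<in> {0..<m*n}"
    then have n: "n > 0" by (cases n) auto
    show "(case (k div n, k mod n) of (a, b) \<Rightarrow> a * n + b) = k" by simp
    show "(k div n, k mod n) \<in> {0..<m} \<times> {0..<n}" using k n
      by (auto simp: less_mult_imp_div_less)
  qed
  finally show ?thesis by simp
qed

definition unvec :: "nat \<Rightarrow> 'a vec \<Rightarrow> 'a mat" where
  "unvec n v = mat n n (\<lambda>(i,j). v $ (j*n+i))"

lemma vecm_carrier[simp]: "V \<in> carrier_mat n n \<Longrightarrow> vecm V \<in> carrier_vec (n*n)"
  by (auto simp: vecm_def)

lemma vecm_index: "V \<in> carrier_mat n n \<Longrightarrow> k < n*n \<Longrightarrow> vecm V $ k = V $$ (k mod n, k div n)"
  by (auto simp: vecm_def)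

lemma dim_vecm[simp]: "dim_vec (vecm V) = dim_row V * dim_col V"
  by (simp add: vecm_def)

lemma unvec_carrier[simp]: "unvec n v \<in> carrier_mat n n"
  by (auto simp: unvec_def)

lemma div_lt_n: "k < n*(n::nat) \<Longrightarrow> k div n < n"
  by (simp add: less_mult_imp_div_less)
lemma mod_lt_n: "k < n*(n::nat) \<Longrightarrow> k mod n < n"
  by (cases n) auto

lemma vecm_unvec: "v \<in> carrier_vec (n*n) \<Longrightarrow> vecm (unvec n v) = v"
  by (rule eq_vecI) (auto simp: vecm_def unvec_def div_lt_n mod_lt_n)

lemma unvec_vecm: "V \<in> carrier_mat n n \<Longrightarrow> unvec n (vecm V) = V"
proof (rule eq_matI)
  fix i j assume V: "V \<in> carrier_mat n n" and i: "i < dim_row V" and j: "j < dim_col V"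
  have "j*n+i < n*n" using i j V
    by (metis add.commute carrier_matD(1,2) mult.commute mult_Suc less_eq_Suc_le mult_le_mono1 add_less_mono1 order_less_le_trans)
  then show "unvec n (vecm V) $$ (i, j) = V $$ (i, j)" using i j V
    by (auto simp: unvec_def vecm_index)
qed (auto simp: unvec_def)

lemma vecm_inj: "V \<in> carrier_mat n n \<Longrightarrow> W \<in> carrier_mat n n \<Longrightarrow> vecm V = vecm W \<Longrightarrow> V = W"
  by (metis unvec_vecm)

lemma vecm_zero: "vecm (0\<^sub>m n n) = 0\<^sub>v (n*n)"
  by (rule eq_vecI) (auto simp: vecm_def div_lt_n mod_lt_n)

lemma kron_carrier[simp]: "P \<in> carrier_mat n n \<Longrightarrow> Q \<in> carrier_mat n n \<Longrightarrow> kron P Q \<in> carrier_mat (n*n) (n*n)"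
  by (auto simp: kron_def)

lemma dim_kron[simp]: "dim_row (kron P Q) = dim_row P * dim_row Q" "dim_col (kron P Q) = dim_col P * dim_col Q"
  by (auto simp: kron_def)

lemma kron_index': "i < dim_row P * dim_row Q \<Longrightarrow> j < dim_col P * dim_col Q \<Longrightarrow>
   kron P Q $$ (i,j) = P $$ (i div dim_row Q, j div dim_col Q) * Q $$ (i mod dim_row Q, j mod dim_col Q)"
  by (auto simp: kron_def)

lemma kron_index: "P \<in> carrier_mat n n \<Longrightarrow> Q \<in> carrier_mat n n \<Longrightarrow> i < n*n \<Longrightarrow> j < n*n \<Longrightarrow>
   kron P Q $$ (i,j) = P $$ (i div n, j div n) * Q $$ (i mod n, j mod n)"
  by (auto simp: kron_def)

lemma kron_mult_vec:
  fixes P Q X :: "'a::comm_ring_1 mat"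
  assumes P: "P \<in> carrier_mat n n" and Q: "Q \<in> carrier_mat n n" and X: "X \<in> carrier_mat n n"
  shows "kron P Q *\<^sub>v vecm X = vecm (Q * X * transpose_mat P)"
proof (rule eq_vecI)
  fix i assume "i < dim_vec (vecm (Q * X * transpose_mat P))"
  then have i: "i < n*n" using P Q X by (simp add: vecm_def)
  have "(kron P Q *\<^sub>v vecm X) $ i = (\<Sum>k\<in>{0..<n*n}. kron P Q $$ (i,k) * vecm X $ k)"
    using i P Q X by (auto simp: scalar_prod_def intro!: sum.cong)
  also have "\<dots> = (\<Sum>k\<in>{0..<n*n}. P $$ (i div n, k div n) * Q $$ (i mod n, k mod n) * X $$ (k mod n, k div n))"
    by (rule sum.cong, insert P Q X i, auto simp: kron_index vecm_index)
  also have "\<dots> = (\<Sum>a\<in>{0..<n}. \<Sum>b\<in>{0..<n}. P $$ (i div n, a) * Q $$ (i mod n, b) * X $$ (b, a))"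
    by (subst sum_split_nn, rule sum.cong, simp, rule sum.cong, auto)
  also have "\<dots> = (\<Sum>a\<in>{0..<n}. (\<Sum>b\<in>{0..<n}. Q$$(i mod n,b) * X$$(b,a)) * P$$(i div n, a))"
    by (auto simp: sum_distrib_right sum_distrib_left ac_simps intro!: sum.cong)
  also have "\<dots> = (Q * X * transpose_mat P) $$ (i mod n, i div n)"
    using P Q X i
    apply (simp add: scalar_prod_def mod_lt_n div_lt_n sum_distrib_left sum_distrib_right)
    apply (rule trans[OF sum.swap])
    apply (simp add: ac_simps)
    done
  also have "\<dots> = vecm (Q * X * transpose_mat P) $ i"
    using P Q X i by (simp add: vecm_def)
  finally show "(kron P Q *\<^sub>v vecm X) $ i = vecm (Q * X * transpose_mat P) $ i" .
qed (insert P Q X, auto simp: vecm_def kron_def)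

lemma kron_mult:
  fixes P Q P' Q' :: "'a::comm_ring_1 mat"
  assumes P: "P \<in> carrier_mat n n" and Q: "Q \<in> carrier_mat n n"
    and P': "P' \<in> carrier_mat n n" and Q': "Q' \<in> carrier_mat n n"
  shows "kron P Q * kron P' Q' = kron (P * P') (Q * Q')"
proof (rule eq_matI)
  fix i j assume "i < dim_row (kron (P * P') (Q * Q'))" "j < dim_col (kron (P * P') (Q * Q'))"
  then have i: "i < n*n" and j: "j < n*n" using P Q P' Q' by (auto simp: kron_def)
  have "(kron P Q * kron P' Q') $$ (i,j) = (\<Sum>k\<in>{0..<n*n}. kron P Q $$ (i,k) * kron P' Q' $$ (k,j))"
    using i j P Q P' Q' by (simp add: scalar_prod_def)
  also have "\<dots> = (\<Sum>k\<in>{0..<n*n}. (P $$ (i div n, k div n) * P' $$ (k div n, j div n)) * (Q $$ (i mod n, k mod n) * Q' $$ (k mod n, j mod n)))"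
    by (rule sum.cong, insert P Q P' Q' i j, auto simp: kron_index ac_simps)
  also have "\<dots> = (\<Sum>a\<in>{0..<n}. \<Sum>b\<in>{0..<n}. (P $$ (i div n, a) * P' $$ (a, j div n)) * (Q $$ (i mod n, b) * Q' $$ (b, j mod n)))"
    by (subst sum_split_nn, rule sum.cong, simp, rule sum.cong, auto)
  also have "\<dots> = (\<Sum>a\<in>{0..<n}. P $$ (i div n, a) * P' $$ (a, j div n)) * (\<Sum>b\<in>{0..<n}. Q $$ (i mod n, b) * Q' $$ (b, j mod n))"
    by (simp add: sum_product)
  also have "\<dots> = kron (P * P') (Q * Q') $$ (i,j)"
    using P Q P' Q' i j by (simp add: kron_index' scalar_prod_def mod_lt_n div_lt_n)
  finally show "(kron P Q * kron P' Q') $$ (i,j) = kron (P * P') (Q * Q') $$ (i,j)" .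
qed (insert P Q P' Q', auto simp: kron_def)

lemma kron_one: "kron (1\<^sub>m n) (1\<^sub>m n :: 'a::comm_ring_1 mat) = 1\<^sub>m (n*n)"
proof (rule eq_matI)
  fix i j assume "i < dim_row (1\<^sub>m (n*n) :: 'a mat)" "j < dim_col (1\<^sub>m (n*n) :: 'a mat)"
  then have i: "i < n*n" and j: "j < n*n" by auto
  have "(i div n = j div n \<and> i mod n = j mod n) \<longleftrightarrow> i = j"
    by (metis div_mult_mod_eq)
  then show "kron (1\<^sub>m n) (1\<^sub>m n :: 'a mat) $$ (i, j) = 1\<^sub>m (n * n) $$ (i, j)"
    using i j by (auto simp: kron_index' div_lt_n mod_lt_n)
qed (auto simp: kron_def)
lemma smult_smult_mat': "a \<cdot>\<^sub>m (b \<cdot>\<^sub>m A) = (a * b) \<cdot>\<^sub>m (A :: 'a::semiring_1 mat)"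
  by (rule eq_matI) (auto simp: mult.assoc)

lemma one_smult_mat': "1 \<cdot>\<^sub>m (A :: 'a::semiring_1 mat) = A"
  by (rule eq_matI) auto

lemma conjugate_one[simp]: "conjugate (1::'a::conjugatable_field) = 1"
proof -
  have "conjugate (1::'a) * conjugate 1 = conjugate 1 * 1"
    by (metis conjugate_dist_mul mult_1_right)
  moreover have "conjugate (1::'a) \<noteq> 0" by simp
  ultimately show ?thesis by simp
qed

lemma dim_mconj[simp]: "dim_row (mconj X) = dim_row X" "dim_col (mconj X) = dim_col X"
  by (auto simp: mconj_def)
lemma dim_madj[simp]: "dim_row (madj X) = dim_col X" "dim_col (madj X) = dim_row X"
  by (auto simp: madj_def)
lemma mconj_carrier[simp]: "X \<in> carrier_mat n m \<Longrightarrow> mconj X \<in> carrier_mat n m"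
  by (auto simp: mconj_def)
lemma madj_carrier[simp]: "X \<in> carrier_mat n m \<Longrightarrow> madj X \<in> carrier_mat m n"
  by (auto simp: madj_def)
lemma mconj_index[simp]: "i < dim_row X \<Longrightarrow> j < dim_col X \<Longrightarrow> mconj X $$ (i,j) = conjugate (X $$ (i,j))"
  by (auto simp: mconj_def)
lemma madj_index[simp]: "i < dim_col X \<Longrightarrow> j < dim_row X \<Longrightarrow> madj X $$ (i,j) = conjugate (X $$ (j,i))"
  by (auto simp: madj_def)

lemma mconj_mult: fixes X Y :: "'a::conjugatable_field mat"
  assumes "X \<in> carrier_mat n k" "Y \<in> carrier_mat k m"
  shows "mconj (X * Y) = mconj X * mconj Y"
  by (rule eq_matI, insert assms, auto simp: scalar_prod_def sum_conjugate conjugate_dist_mul)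

lemma madj_mult: fixes X Y :: "'a::conjugatable_field mat"
  assumes "X \<in> carrier_mat n k" "Y \<in> carrier_mat k m"
  shows "madj (X * Y) = madj Y * madj X"
  by (rule eq_matI, insert assms, auto simp: scalar_prod_def sum_conjugate conjugate_dist_mul ac_simps)

lemma madj_madj[simp]: "madj (madj (X::'a::conjugatable_field mat)) = X"
  by (rule eq_matI) auto

lemma mconj_one[simp]: "mconj (1\<^sub>m n :: 'a::conjugatable_field mat) = 1\<^sub>m n"
  by (rule eq_matI) auto
lemma madj_one[simp]: "madj (1\<^sub>m n :: 'a::conjugatable_field mat) = 1\<^sub>m n"
  by (rule eq_matI) auto

lemma transpose_mconj_madj: "transpose_mat (mconj (madj (Y::'a::conjugatable_field mat))) = Y"
  by (rule eq_matI) auto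

lemma bicomm_carrier: "X \<in> bicommutant n A \<Longrightarrow> X \<in> carrier_mat n n"
  by (auto simp: bicommutant_def commutant_def)

lemma bicomm_one: "1\<^sub>m n \<in> bicommutant n (A::'a::semiring_1 mat)"
  by (auto simp: bicommutant_def commutant_def)

lemma bicomm_self: "A \<in> carrier_mat n n \<Longrightarrow> A \<in> bicommutant n A"
  by (auto simp: bicommutant_def commutant_def)

lemma bicomm_mult: fixes X Y :: "'a::semiring_1 mat"
  assumes X: "X \<in> bicommutant n A" and Y: "Y \<in> bicommutant n A"
  shows "X * Y \<in> bicommutant n A"
proof -
  have Xc: "X \<in> carrier_mat n n" and Yc: "Y \<in> carrier_mat n n" using X Y by (auto simp: bicomm_carrier)
  show ?thesis unfolding bicommutant_def commutant_def
  proof (intro CollectI conjI ballI)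
    show "X * Y \<in> carrier_mat n n" using Xc Yc by auto
    fix Z assume Z: "Z \<in> {X \<in> carrier_mat n n. \<forall>Y\<in>{A}. X * Y = Y * X}"
    then have Zc: "Z \<in> carrier_mat n n" by auto
    have XZ: "X * Z = Z * X" and YZ: "Y * Z = Z * Y" using X Y Z unfolding bicommutant_def commutant_def by auto
    have "X * Y * Z = X * (Y * Z)" using Xc Yc Zc by (simp add: assoc_mult_mat)
    also have "\<dots> = X * Z * Y" using Xc Yc Zc YZ by (simp add: assoc_mult_mat)
    also have "\<dots> = Z * X * Y" using XZ by simp
    also have "\<dots> = Z * (X * Y)" using Xc Yc Zc by (simp add: assoc_mult_mat)
    finally show "X * Y * Z = Z * (X * Y)" .
  qed
qed

lemma bicomm_madj: fixes A B :: "'a::conjugatable_field mat"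
  assumes A: "A \<in> carrier_mat n n" and B: "B \<in> bicommutant n A"
  shows "madj B \<in> bicommutant n (madj A)"
  unfolding bicommutant_def commutant_def
proof (intro CollectI conjI ballI)
  have Bc: "B \<in> carrier_mat n n" using B by (rule bicomm_carrier)
  then show "madj B \<in> carrier_mat n n" by simp
  fix Z assume Z: "Z \<in> {X \<in> carrier_mat n n. \<forall>Y\<in>{madj A}. X * Y = Y * X}"
  then have Zc: "Z \<in> carrier_mat n n" and ZA: "Z * madj A = madj A * Z" by auto
  have "madj (Z * madj A) = madj (madj A * Z)" using ZA by simp
  then have "A * madj Z = madj Z * A" using A Zc by (simp add: madj_mult[of _ n n _ n])
  then have "madj Z \<in> commutant n {A}" using Zc by (auto simp: commutant_def)
  then have "B * madj Z = madj Z * B" using B unfolding bicommutant_def commutant_def by auto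
  then have "madj (B * madj Z) = madj (madj Z * B)" by simp
  then show "madj B * Z = Z * madj B" using Bc Zc by (simp add: madj_mult[of _ n n _ n])
qed

lemma kspan_carrier: assumes S: "S \<subseteq> carrier_mat n n" and M: "M \<in> kron_span n S"
  shows "M \<in> carrier_mat (n*n) (n*n)"
  using M by induct (insert S, auto)

lemma kspan_add: fixes M N :: "'a::conjugatable_field mat"
  assumes S: "S \<subseteq> carrier_mat n n" and M: "M \<in> kron_span n S" and N: "N \<in> kron_span n S"
  shows "M + N \<in> kron_span n S"
  using M
proof induct
  case zero
  then show ?case using kspan_carrier[OF S N] N by simp
next
  case (step M X Y c)
  have XY: "X \<in> carrier_mat n n" "Y \<in> carrier_mat n n" using S step(3,4) by auto
  have "c \<cdot>\<^sub>m kron (mconj X) Y + M + N = c \<cdot>\<^sub>m kron (mconj X) Y + (M + N)"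
    using step S XY kspan_carrier[OF S N] kspan_carrier[OF S step(1)]
    by (intro assoc_add_mat[of _ "n*n" "n*n"]) auto
  then show ?case using step by (simp add: kron_span.step)
qed

lemma kspan_smult: fixes M :: "'a::conjugatable_field mat"
  assumes S: "S \<subseteq> carrier_mat n n" and M: "M \<in> kron_span n S"
  shows "d \<cdot>\<^sub>m M \<in> kron_span n S"
  using M
proof induct
  case zero
  then show ?case by (simp add: kron_span.zero)
next
  case (step M X Y c)
  have XY: "X \<in> carrier_mat n n" "Y \<in> carrier_mat n n" using S step(3,4) by auto
  have "d \<cdot>\<^sub>m (c \<cdot>\<^sub>m kron (mconj X) Y + M) = (d*c) \<cdot>\<^sub>m kron (mconj X) Y + d \<cdot>\<^sub>m M"
    using step S XY kspan_carrier[OF S step(1)]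
    by (subst add_smult_distrib_left_mat[of _ "n*n" "n*n"]) (auto simp: smult_smult_mat')
  then show ?case using step by (simp add: kron_span.step)
qed

lemma kspan_kron: fixes X Y :: "'a::conjugatable_field mat"
  assumes S: "S \<subseteq> carrier_mat n n" and X: "X \<in> S" and Y: "Y \<in> S"
  shows "kron (mconj X) Y \<in> kron_span n S"
proof -
  have "1 \<cdot>\<^sub>m kron (mconj X) Y + 0\<^sub>m (n*n) (n*n) \<in> kron_span n S"
    by (rule kron_span.step[OF kron_span.zero X Y])
  moreover have "1 \<cdot>\<^sub>m kron (mconj X) Y + 0\<^sub>m (n*n) (n*n) = kron (mconj X) Y"
    using S X Y subsetD[OF S X] subsetD[OF S Y] by (subst right_add_zero_mat[of _ "n*n" "n*n"]) (auto simp: one_smult_mat')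
  ultimately show ?thesis by simp
qed

locale kalg =
  fixes n :: nat and S :: "'a::conjugatable_field mat set"
  assumes S: "S \<subseteq> carrier_mat n n"
    and S_one: "1\<^sub>m n \<in> S"
    and S_mult: "X \<in> S \<Longrightarrow> Y \<in> S \<Longrightarrow> X * Y \<in> S"
begin

lemma kspan_mult_kron:
  assumes X: "X \<in> S" and Y: "Y \<in> S" and N: "N \<in> kron_span n S"
  shows "kron (mconj X) Y * N \<in> kron_span n S"
  using N
proof induct
  case zero
  have "kron (mconj X) Y * 0\<^sub>m (n*n) (n*n) = 0\<^sub>m (n*n) (n*n)"
    using subsetD[OF S X] subsetD[OF S Y] by (intro right_mult_zero_mat) auto
  then show ?case by (simp add: kron_span.zero)
next
  case (step M X' Y' c)
  have c: "X \<in> carrier_mat n n" "Y \<in> carrier_mat n n" "X' \<in> carrier_mat n n" "Y' \<in> carrier_mat n n"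
    "M \<in> carrier_mat (n*n) (n*n)"
    using X Y step S kspan_carrier[OF S step(1)] by auto
  have "kron (mconj X) Y * (c \<cdot>\<^sub>m kron (mconj X') Y' + M) = c \<cdot>\<^sub>m (kron (mconj X) Y * kron (mconj X') Y') + kron (mconj X) Y * M"
    using c by (subst mult_add_distrib_mat[of _ "n*n" "n*n"], auto simp: mult_smult_distrib[of _ "n*n" "n*n"])
  also have "kron (mconj X) Y * kron (mconj X') Y' = kron (mconj (X * X')) (Y * Y')"
    using c by (simp add: kron_mult[of _ n] mconj_mult[of _ n n _ n])
  finally show ?case
    using step X Y S_mult
    by (auto intro!: kspan_add[OF S] kspan_smult[OF S] kspan_kron[OF S])
qed

lemma kspan_mult:
  assumes M: "M \<in> kron_span n S" and N: "N \<in> kron_span n S"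
  shows "M * N \<in> kron_span n S"
  using M
proof induct
  case zero
  have "0\<^sub>m (n*n) (n*n) * N = 0\<^sub>m (n*n) (n*n)"
    using kspan_carrier[OF S N] by (intro left_mult_zero_mat) auto
  then show ?case by (simp add: kron_span.zero)
next
  case (step M X Y c)
  have c: "X \<in> carrier_mat n n" "Y \<in> carrier_mat n n"
    "M \<in> carrier_mat (n*n) (n*n)" "N \<in> carrier_mat (n*n) (n*n)"
    using step S kspan_carrier[OF S step(1)] kspan_carrier[OF S N] by auto
  have "(c \<cdot>\<^sub>m kron (mconj X) Y + M) * N = c \<cdot>\<^sub>m (kron (mconj X) Y * N) + M * N"
    using c by (subst add_mult_distrib_mat[of _ "n*n" "n*n"], auto simp: mult_smult_assoc_mat[of _ "n*n" "n*n"])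
  then show ?case
    using step N by (auto intro!: kspan_add[OF S] kspan_smult[OF S] kspan_mult_kron)
qed

lemma kspan_one: "1\<^sub>m (n*n) \<in> kron_span n S"
  using kspan_kron[OF S S_one S_one] by (simp add: kron_one)

end
lemma mat_eq_by_vec:
  fixes A B :: "'a::comm_ring_1 mat"
  assumes A: "A \<in> carrier_mat nr nc" and B: "B \<in> carrier_mat nr nc"
    and H: "\<And>v. v \<in> carrier_vec nc \<Longrightarrow> A *\<^sub>v v = B *\<^sub>v v"
  shows "A = B"
proof (rule eq_matI)
  fix i j assume i: "i < dim_row B" and j: "j < dim_col B"
  have "(A *\<^sub>v unit_vec nc j) $ i = (B *\<^sub>v unit_vec nc j) $ i" using H[of "unit_vec nc j"] by simp
  then show "A $$ (i,j) = B $$ (i,j)" using A B i j by simp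
qed (insert A B, auto)

lemma vecm_add: "V \<in> carrier_mat n n \<Longrightarrow> W \<in> carrier_mat n n \<Longrightarrow> vecm (V + W) = vecm V + vecm W"
  by (rule eq_vecI) (auto simp: vecm_def div_lt_n mod_lt_n)

lemma lyap_carrier[simp]: "Y \<in> carrier_mat n n \<Longrightarrow> X \<in> carrier_mat n n \<Longrightarrow> lyap Y X \<in> carrier_mat n n"
  by (auto simp: lyap_def)

definition Lmat :: "nat \<Rightarrow> 'a::conjugatable_field mat \<Rightarrow> 'a mat" where
  "Lmat n Y = kron (mconj (madj Y)) (1\<^sub>m n) + kron (1\<^sub>m n) (madj Y)"

lemma Lmat_carrier[simp]: "Y \<in> carrier_mat n n \<Longrightarrow> Lmat n Y \<in> carrier_mat (n*n) (n*n)"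
  by (auto simp: Lmat_def)

lemma Lmat_vec: fixes Y X :: "'a::conjugatable_field mat"
  assumes Y: "Y \<in> carrier_mat n n" and X: "X \<in> carrier_mat n n"
  shows "Lmat n Y *\<^sub>v vecm X = vecm (lyap Y X)"
proof -
  have "Lmat n Y *\<^sub>v vecm X = kron (mconj (madj Y)) (1\<^sub>m n) *\<^sub>v vecm X + kron (1\<^sub>m n) (madj Y) *\<^sub>v vecm X"
    unfolding Lmat_def using X Y by (intro add_mult_distrib_mat_vec[of _ "n*n" "n*n"]) auto
  also have "kron (mconj (madj Y)) (1\<^sub>m n) *\<^sub>v vecm X = vecm (X * Y)"
    using X Y by (subst kron_mult_vec[of _ n]) (auto simp: transpose_mconj_madj)
  also have "kron (1\<^sub>m n) (madj Y) *\<^sub>v vecm X = vecm (madj Y * X)"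
    using X Y by (subst kron_mult_vec[of _ n]) auto
  also have "vecm (X * Y) + vecm (madj Y * X) = vecm (X*Y + madj Y * X)"
    by (rule vecm_add[symmetric]) (use X Y in auto)
  finally show ?thesis unfolding lyap_def .
qed

lemma (in kalg) Lmat_in: assumes "madj Y \<in> S"
  shows "Lmat n Y \<in> kron_span n S"
  unfolding Lmat_def
  using kspan_add[OF S kspan_kron[OF S assms S_one] kspan_kron[OF S S_one assms]] by simp

lemma main_generic:
  fixes A B :: "'a::conjugatable_field mat"
  assumes A: "A \<in> carrier_mat n n" and B: "B \<in> bicommutant n A"
    and inj: "\<And>X. X \<in> carrier_mat n n \<Longrightarrow> lyap A X = 0\<^sub>m n n \<Longrightarrow> X = 0\<^sub>m n n"
    and invcl: "\<And>M. M \<in> kron_span n (bicommutant n (madj A)) \<Longrightarrow> det M \<noteq> 0 \<Longrightarrow>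
        \<exists>R\<in>kron_span n (bicommutant n (madj A)). M * R = 1\<^sub>m (n*n)"
  shows "matricization_in_span n A B"
proof -
  define S where "S = bicommutant n (madj A)"
  interpret kalg n S
    by (unfold_locales, auto simp: S_def bicomm_carrier bicomm_one bicomm_mult)
  have Bc: "B \<in> carrier_mat n n" using B by (rule bicomm_carrier)
  define La where "La = Lmat n A"
  define Lb where "Lb = Lmat n B"
  have LaT: "La \<in> kron_span n S" unfolding La_def
    by (rule Lmat_in) (simp add: S_def bicomm_self A)
  have LbT: "Lb \<in> kron_span n S" unfolding Lb_def
    by (rule Lmat_in) (simp add: S_def bicomm_madj A B)
  have Lac: "La \<in> carrier_mat (n*n) (n*n)" unfolding La_def using A by simp
  have Lbc: "Lb \<in> carrier_mat (n*n) (n*n)" unfolding Lb_def using Bc by simp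
  have "det La \<noteq> 0"
  proof
    assume "det La = 0"
    then obtain v where v: "v \<in> carrier_vec (n*n)" "v \<noteq> 0\<^sub>v (n*n)" "La *\<^sub>v v = 0\<^sub>v (n*n)"
      using det_0_iff_vec_prod_zero[OF Lac] by auto
    define X where "X = unvec n v"
    have Xc: "X \<in> carrier_mat n n" by (simp add: X_def)
    have vX: "vecm X = v" using v by (simp add: X_def vecm_unvec)
    have "vecm (lyap A X) = vecm (0\<^sub>m n n)"
      using Lmat_vec[OF A Xc] v vX by (simp add: La_def vecm_zero)
    then have "lyap A X = 0\<^sub>m n n" using A Xc by (intro vecm_inj[of _ n]) auto
    then have "X = 0\<^sub>m n n" using inj Xc by auto
    then have "v = 0\<^sub>v (n*n)" using vX by (simp add: vecm_zero)
    then show False using v by simp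
  qed
  then obtain R where RT: "R \<in> kron_span n S" and LaR: "La * R = 1\<^sub>m (n*n)"
    using invcl LaT unfolding S_def by blast
  have Rc: "R \<in> carrier_mat (n*n) (n*n)" using kspan_carrier[OF S RT] .
  have RLa: "R * La = 1\<^sub>m (n*n)" using mat_mult_left_right_inverse[OF Lac Rc LaR] .
  show ?thesis unfolding matricization_in_span_def
  proof (intro ballI impI)
    fix L assume Lc: "L \<in> carrier_mat (n*n) (n*n)"
      and H: "\<forall>V\<in>carrier_mat n n. L *\<^sub>v vecm V = vecm (lyapAB A B V)"
    have "L = Lb * R"
    proof (rule mat_eq_by_vec[OF Lc])
      show "Lb * R \<in> carrier_mat (n*n) (n*n)" using Lbc Rc by simp
      fix v :: "'a vec" assume v: "v \<in> carrier_vec (n*n)"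
      define V where "V = unvec n v"
      have Vc: "V \<in> carrier_mat n n" by (simp add: V_def)
      have vV: "vecm V = v" using v by (simp add: V_def vecm_unvec)
      define X0 where "X0 = unvec n (R *\<^sub>v v)"
      have X0c: "X0 \<in> carrier_mat n n" by (simp add: X0_def)
      have vX0: "vecm X0 = R *\<^sub>v v" using v Rc by (simp add: X0_def vecm_unvec)
      have "vecm (lyap A X0) = La *\<^sub>v (R *\<^sub>v v)"
        using Lmat_vec[OF A X0c] vX0 by (simp add: La_def)
      also have "\<dots> = (La * R) *\<^sub>v v" using Lac Rc v by (simp add: assoc_mult_mat_vec)
      also have "\<dots> = vecm V" using v vV LaR by simp
      finally have lX0: "lyap A X0 = V" using A X0c Vc by (intro vecm_inj[of _ n]) auto
      have the: "(THE X. X \<in> carrier_mat (dim_row A) (dim_row A) \<and> lyap A X = V) = X0"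
      proof (rule the_equality)
        show "X0 \<in> carrier_mat (dim_row A) (dim_row A) \<and> lyap A X0 = V" using X0c lX0 A by simp
        fix X assume "X \<in> carrier_mat (dim_row A) (dim_row A) \<and> lyap A X = V"
        then have Xc: "X \<in> carrier_mat n n" and lX: "lyap A X = V" using A by auto
        have "vecm X = (R * La) *\<^sub>v vecm X" using Xc RLa by simp
        also have "\<dots> = R *\<^sub>v (La *\<^sub>v vecm X)" using Rc Lac Xc by (simp add: assoc_mult_mat_vec)
        also have "La *\<^sub>v vecm X = vecm V" using Lmat_vec[OF A Xc] lX by (simp add: La_def)
        finally have "vecm X = vecm X0" using vV vX0 by simp
        then show "X = X0" using Xc X0c by (intro vecm_inj[of _ n])
      qed
      have "L *\<^sub>v v = vecm (lyapAB A B V)" using H Vc vV by auto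
      also have "\<dots> = vecm (lyap B X0)" unfolding lyapAB_def the ..
      also have "\<dots> = Lb *\<^sub>v (R *\<^sub>v v)" using Lmat_vec[OF Bc X0c] vX0 by (simp add: Lb_def)
      also have "\<dots> = (Lb * R) *\<^sub>v v" using Lbc Rc v by (simp add: assoc_mult_mat_vec)
      finally show "L *\<^sub>v v = (Lb * R) *\<^sub>v v" .
    qed
    then show "L \<in> kron_span n (bicommutant n (madj A))"
      using kspan_mult[OF LbT RT] unfolding S_def by simp
  qed
qed
fun mprod :: "nat \<Rightarrow> 'a::semiring_1 mat list \<Rightarrow> 'a mat" where
  "mprod n [] = 1\<^sub>m n"
| "mprod n (M # Ms) = M * mprod n Ms"

lemma mprod_carrier[simp]: "set Ms \<subseteq> carrier_mat n n \<Longrightarrow> mprod n Ms \<in> carrier_mat n n"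
  by (induct Ms) auto

lemma mprod_snoc: "set Ms \<subseteq> carrier_mat n n \<Longrightarrow> M \<in> carrier_mat n n \<Longrightarrow>
    mprod n (Ms @ [M]) = mprod n Ms * M"
proof (induct Ms)
  case Nil then show ?case by simp
next
  case (Cons N Ms)
  then show ?case by (simp add: assoc_mult_mat[of _ n n _ n _ n])
qed

lemma zero_mult_vec': "v \<in> carrier_vec m \<Longrightarrow> 0\<^sub>m n m *\<^sub>v v = 0\<^sub>v n"
  by (rule eq_vecI) (auto simp: scalar_prod_def)

lemma triang_annih_aux:
  fixes T :: "'a::comm_ring_1 mat"
  assumes T: "T \<in> carrier_mat n n" and ut: "upper_triangular T"
  shows "k \<le> n \<Longrightarrow> v \<in> carrier_vec n \<Longrightarrow> (\<forall>i. k \<le> i \<longrightarrow> i < n \<longrightarrow> v $ i = 0) \<Longrightarrow>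
     mprod n (map (\<lambda>i. T + (- T $$ (i,i)) \<cdot>\<^sub>m 1\<^sub>m n) [0..<k]) *\<^sub>v v = 0\<^sub>v n"
proof (induct k arbitrary: v)
  case 0
  then have "v = 0\<^sub>v n" by (intro eq_vecI) auto
  then show ?case by simp
next
  case (Suc k)
  define F where "F = T + (- T $$ (k,k)) \<cdot>\<^sub>m 1\<^sub>m n"
  have Fc: "F \<in> carrier_mat n n" using T by (simp add: F_def)
  have setc: "set (map (\<lambda>i. T + (- T $$ (i,i)) \<cdot>\<^sub>m 1\<^sub>m n) [0..<k]) \<subseteq> carrier_mat n n"
    using T by auto
  define w where "w = F *\<^sub>v v"
  have wc: "w \<in> carrier_vec n" using Fc Suc(3) by (simp add: w_def)
  have w0: "\<forall>i. k \<le> i \<longrightarrow> i < n \<longrightarrow> w $ i = 0"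
  proof (intro allI impI)
    fix i assume ki: "k \<le> i" and i: "i < n"
    have "w $ i = (\<Sum>j\<in>{0..<n}. F $$ (i,j) * v $ j)"
      using Fc Suc(3) i by (simp add: w_def scalar_prod_def)
    also have "\<dots> = 0"
    proof (rule sum.neutral, intro ballI)
      fix j assume "j \<in> {0..<n}"
      then have j: "j < n" by simp
      have Fij: "F $$ (i,j) = T $$ (i,j) - (if i = j then T $$ (k,k) else 0)"
        using T i j by (simp add: F_def)
      show "F $$ (i,j) * v $ j = 0"
      proof (cases "j < i")
        case True
        then have "T $$ (i,j) = 0" using ut T i by (auto simp: upper_triangular_def)
        then show ?thesis using True Fij by simp
      next
        case False
        show ?thesis
        proof (cases "Suc k \<le> j")
          case True then show ?thesis using Suc(4) j by simp
        next
          case False2: False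
          then have "j = k" "i = k" using False ki by auto
          then show ?thesis using Fij by simp
        qed
      qed
    qed
    finally show "w $ i = 0" .
  qed
  have "mprod n (map (\<lambda>i. T + (- T $$ (i,i)) \<cdot>\<^sub>m 1\<^sub>m n) [0..<Suc k]) =
        mprod n (map (\<lambda>i. T + (- T $$ (i,i)) \<cdot>\<^sub>m 1\<^sub>m n) [0..<k]) * F"
    using mprod_snoc[OF setc Fc] by (simp add: F_def)
  then have "mprod n (map (\<lambda>i. T + (- T $$ (i,i)) \<cdot>\<^sub>m 1\<^sub>m n) [0..<Suc k]) *\<^sub>v v =
     mprod n (map (\<lambda>i. T + (- T $$ (i,i)) \<cdot>\<^sub>m 1\<^sub>m n) [0..<k]) *\<^sub>v w"
    using setc Fc Suc(3) by (simp add: w_def assoc_mult_mat_vec[of _ n n _ n])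
  also have "\<dots> = 0\<^sub>v n" using Suc(1)[OF _ wc w0] Suc(2) by simp
  finally show ?case .
qed

lemma triang_annih:
  fixes T :: "'a::comm_ring_1 mat"
  assumes T: "T \<in> carrier_mat n n" and ut: "upper_triangular T"
  shows "mprod n (map (\<lambda>e. T + (- e) \<cdot>\<^sub>m 1\<^sub>m n) (diag_mat T)) = 0\<^sub>m n n"
proof -
  have "map (\<lambda>e. T + (- e) \<cdot>\<^sub>m 1\<^sub>m n) (diag_mat T) = map (\<lambda>i. T + (- T $$ (i,i)) \<cdot>\<^sub>m 1\<^sub>m n) [0..<n]"
    using T by (simp add: diag_mat_def)
  moreover have "mprod n (map (\<lambda>i. T + (- T $$ (i,i)) \<cdot>\<^sub>m 1\<^sub>m n) [0..<n]) = 0\<^sub>m n n"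
  proof (rule mat_eq_by_vec[of _ n n])
    show "mprod n (map (\<lambda>i. T + (- T $$ (i,i)) \<cdot>\<^sub>m 1\<^sub>m n) [0..<n]) \<in> carrier_mat n n"
      by (rule mprod_carrier) (use T in auto)
  qed (insert T, auto simp: zero_mult_vec' intro!: triang_annih_aux[OF T ut])
  ultimately show ?thesis by simp
qed

lemma mprod_sim:
  fixes P Q :: "'a::comm_ring_1 mat"
  assumes P: "P \<in> carrier_mat n n" and Q: "Q \<in> carrier_mat n n" and PQ: "P * Q = 1\<^sub>m n" and QP: "Q * P = 1\<^sub>m n"
  shows "set Fs \<subseteq> carrier_mat n n \<Longrightarrow> mprod n (map (\<lambda>F. P * F * Q) Fs) = P * mprod n Fs * Q"
proof (induct Fs)
  case Nil
  then show ?case using P Q PQ by simp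
next
  case (Cons F Fs)
  then have F: "F \<in> carrier_mat n n" and R: "mprod n Fs \<in> carrier_mat n n" by auto
  have "mprod n (map (\<lambda>F. P * F * Q) (F # Fs)) = P * F * Q * (P * mprod n Fs * Q)"
    using Cons by simp
  also have "\<dots> = P * F * (Q * P) * mprod n Fs * Q"
    using P Q F R by (simp add: assoc_mult_mat[of _ n n _ n _ n])
  also have "\<dots> = P * (F * mprod n Fs) * Q"
    using P Q F R QP by (simp add: assoc_mult_mat[of _ n n _ n _ n])
  finally show ?case by simp
qed

lemma CH_complex:
  fixes A :: "complex mat"
  assumes A: "A \<in> carrier_mat n n"
  shows "\<exists>es. (\<forall>e\<in>set es. eigenvalue A e) \<and> mprod n (map (\<lambda>e. A + (- e) \<cdot>\<^sub>m 1\<^sub>m n) es) = 0\<^sub>m n n"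
proof -
  obtain es where cp: "char_poly A = (\<Prod>a\<leftarrow>es. [:- a, 1:])"
    using char_poly_factorized[OF A] by blast
  obtain B P Q where sd: "schur_decomposition A es = (B,P,Q)" by (cases "schur_decomposition A es")
  from schur_decomposition[OF A cp sd]
  have sim: "similar_mat_wit A B P Q" and ut: "upper_triangular B" and dg: "diag_mat B = es" by auto
  from sim A have Bc: "B \<in> carrier_mat n n" and Pc: "P \<in> carrier_mat n n" and Qc: "Q \<in> carrier_mat n n"
    and PQ: "P * Q = 1\<^sub>m n" and QP: "Q * P = 1\<^sub>m n" and AB: "A = P * B * Q"
    unfolding similar_mat_wit_def Let_def by auto
  have eig: "\<forall>e\<in>set es. eigenvalue A e"
    using A cp by (simp add: eigenvalue_root_char_poly linear_poly_root)
  have fac: "A + (- e) \<cdot>\<^sub>m 1\<^sub>m n = P * (B + (- e) \<cdot>\<^sub>m 1\<^sub>m n) * Q" for e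
  proof -
    have Pe: "P * ((- e) \<cdot>\<^sub>m 1\<^sub>m n) = (- e) \<cdot>\<^sub>m P"
      by (subst mult_smult_distrib[of _ n n]) (use Pc in auto)
    have "P * (B + (- e) \<cdot>\<^sub>m 1\<^sub>m n) * Q = (P * B + (- e) \<cdot>\<^sub>m P) * Q"
      using Pc Bc by (simp add: mult_add_distrib_mat[of _ n n] Pe)
    also have "\<dots> = P * B * Q + (- e) \<cdot>\<^sub>m (P * Q)"
      using Pc Bc Qc by (simp add: add_mult_distrib_mat[of _ n n] mult_smult_assoc_mat[of _ n n])
    finally show ?thesis using AB PQ by simp
  qed
  have "mprod n (map (\<lambda>e. A + (- e) \<cdot>\<^sub>m 1\<^sub>m n) es) = mprod n (map (\<lambda>F. P * F * Q) (map (\<lambda>e. B + (- e) \<cdot>\<^sub>m 1\<^sub>m n) es))"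
    by (simp add: fac comp_def)
  also have "\<dots> = P * mprod n (map (\<lambda>e. B + (- e) \<cdot>\<^sub>m 1\<^sub>m n) es) * Q"
    by (rule mprod_sim[OF Pc Qc PQ QP]) (use Bc in auto)
  also have "mprod n (map (\<lambda>e. B + (- e) \<cdot>\<^sub>m 1\<^sub>m n) es) = 0\<^sub>m n n"
    using triang_annih[OF Bc ut] dg by simp
  finally have "mprod n (map (\<lambda>e. A + (- e) \<cdot>\<^sub>m 1\<^sub>m n) es) = 0\<^sub>m n n" using Pc Qc by simp
  with eig show ?thesis by blast
qed
interpretation cnj_hom: comm_ring_hom cnj by unfold_locales auto

lemma det_madj_complex: assumes G: "(G::complex mat) \<in> carrier_mat n n"
  shows "det (madj G) = cnj (det G)"
proof -
  have "madj G = transpose_mat (cnj_hom.mat_hom G)"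
    by (rule eq_matI) auto
  then show ?thesis using G by (simp add: det_transpose[of _ n])
qed

lemma factor_inj:
  fixes A :: "complex mat"
  assumes A: "A \<in> carrier_mat n n" and reg: "lyap_regular A" and e: "eigenvalue A e"
    and Y: "Y \<in> carrier_mat n n" and GY: "(- madj A + (- e) \<cdot>\<^sub>m 1\<^sub>m n) * Y = 0\<^sub>m n n"
  shows "Y = 0\<^sub>m n n"
proof (rule ccontr)
  define G where "G = - madj A + (- e) \<cdot>\<^sub>m 1\<^sub>m n"
  have Gc: "G \<in> carrier_mat n n" using A by (simp add: G_def)
  assume "Y \<noteq> 0\<^sub>m n n"
  have "\<exists>j<n. col Y j \<noteq> 0\<^sub>v n"
  proof (rule ccontr)
    assume "\<not> (\<exists>j<n. col Y j \<noteq> 0\<^sub>v n)"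
    then have allz: "\<And>j. j < n \<Longrightarrow> col Y j = 0\<^sub>v n" by auto
    have "Y = 0\<^sub>m n n"
    proof (rule eq_matI)
      fix i k assume i: "i < dim_row (0\<^sub>m n n :: complex mat)" and k: "k < dim_col (0\<^sub>m n n :: complex mat)"
      have "col Y k $ i = 0" using allz[of k] i k by simp
      then show "Y $$ (i,k) = 0\<^sub>m n n $$ (i,k)" using Y i k by simp
    qed (use Y in auto)
    with \<open>Y \<noteq> 0\<^sub>m n n\<close> show False by simp
  qed
  then obtain j where j: "j < n" and cj: "col Y j \<noteq> 0\<^sub>v n" by blast
  have "G *\<^sub>v col Y j = col (G * Y) j" by (rule col_mult2[OF Gc Y j, symmetric])
  also have "\<dots> = 0\<^sub>v n" using GY j by (simp add: G_def)
  finally have Gv: "G *\<^sub>v col Y j = 0\<^sub>v n" .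
  have cYc: "col Y j \<in> carrier_vec n" using Y unfolding carrier_vec_def carrier_mat_def by simp
  have "det G = 0" unfolding det_0_iff_vec_prod_zero[OF Gc]
    by (rule exI[of _ "col Y j"]) (intro conjI cYc cj Gv)
  then have "det (madj G) = 0" using det_madj_complex[OF Gc] by simp
  moreover have "madj G = - char_matrix A (- cnj e)"
    by (rule eq_matI) (use A in \<open>auto simp: G_def char_matrix_def\<close>)
  ultimately have "det (char_matrix A (- cnj e)) = 0"
    using det_0_negate[of "char_matrix A (- cnj e)" n] A by simp
  then have "eigenvalue A (- cnj e)" using eigenvalue_det[OF A] by simp
  with reg e have "e + cnj (- cnj e) \<noteq> 0" unfolding lyap_regular_def by blast
  then show False by simp
qed

lemma mprod_factor_inj:
  fixes A :: "complex mat"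
  assumes A: "A \<in> carrier_mat n n" and reg: "lyap_regular A"
  shows "\<forall>e\<in>set es. eigenvalue A e \<Longrightarrow> Y \<in> carrier_mat n n \<Longrightarrow>
    mprod n (map (\<lambda>e. - madj A + (- e) \<cdot>\<^sub>m 1\<^sub>m n) es) * Y = 0\<^sub>m n n \<Longrightarrow> Y = 0\<^sub>m n n"
proof (induct es arbitrary: Y)
  case Nil then show ?case by simp
next
  case (Cons e es)
  have sc: "set (map (\<lambda>e. - madj A + (- e) \<cdot>\<^sub>m 1\<^sub>m n) es) \<subseteq> carrier_mat n n" using A by auto
  have Gc: "- madj A + (- e) \<cdot>\<^sub>m 1\<^sub>m n \<in> carrier_mat n n" using A by simp
  have "(- madj A + (- e) \<cdot>\<^sub>m 1\<^sub>m n) * (mprod n (map (\<lambda>e. - madj A + (- e) \<cdot>\<^sub>m 1\<^sub>m n) es) * Y) = 0\<^sub>m n n"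
    using Cons(4) Gc sc Cons(3) by (simp add: assoc_mult_mat[of _ n n _ n _ n])
  moreover have "mprod n (map (\<lambda>e. - madj A + (- e) \<cdot>\<^sub>m 1\<^sub>m n) es) * Y \<in> carrier_mat n n"
    using mult_carrier_mat[OF mprod_carrier[OF sc] Cons(3)] .
  moreover have "eigenvalue A e" using Cons(2) by simp
  ultimately have "mprod n (map (\<lambda>e. - madj A + (- e) \<cdot>\<^sub>m 1\<^sub>m n) es) * Y = 0\<^sub>m n n"
    using factor_inj[OF A reg] by blast
  then show ?case using Cons by auto
qed

lemma lyap_inj_complex:
  fixes A X :: "complex mat"
  assumes A: "A \<in> carrier_mat n n" and reg: "lyap_regular A" and X: "X \<in> carrier_mat n n"
    and L: "lyap A X = 0\<^sub>m n n"
  shows "X = 0\<^sub>m n n"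
proof -
  define C where "C = - madj A"
  have Cc: "C \<in> carrier_mat n n" using A by (simp add: C_def)
  have XA: "X * A = C * X"
  proof (rule eq_matI)
    fix i j assume ij: "i < dim_row (C * X)" "j < dim_col (C * X)"
    have "(X * A + madj A * X) $$ (i,j) = 0" using L ij Cc X by (simp add: lyap_def)
    then have "(X * A) $$ (i,j) = - (madj A * X) $$ (i,j)" using ij Cc X A by (simp add: add_eq_0_iff)
    also have "\<dots> = (C * X) $$ (i,j)" using ij Cc X A
      by (simp add: C_def scalar_prod_def sum_negf[symmetric])
    finally show "(X * A) $$ (i,j) = (C * X) $$ (i,j)" .
  qed (use X A Cc in auto)
  have step: "X * (A + (- e) \<cdot>\<^sub>m 1\<^sub>m n) = (C + (- e) \<cdot>\<^sub>m 1\<^sub>m n) * X" for e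
  proof -
    have Xe: "X * ((- e) \<cdot>\<^sub>m 1\<^sub>m n) = (- e) \<cdot>\<^sub>m X"
      by (subst mult_smult_distrib[of _ n n]) (use X in auto)
    have "X * (A + (- e) \<cdot>\<^sub>m 1\<^sub>m n) = X * A + (- e) \<cdot>\<^sub>m X"
      using X A by (simp add: mult_add_distrib_mat[of _ n n] Xe)
    also have "\<dots> = C * X + (- e) \<cdot>\<^sub>m X" using XA by simp
    also have "\<dots> = (C + (- e) \<cdot>\<^sub>m 1\<^sub>m n) * X"
      using X Cc by (simp add: add_mult_distrib_mat[of _ n n] mult_smult_assoc_mat[of _ n n])
    finally show ?thesis .
  qed
  have comm: "X * mprod n (map (\<lambda>e. A + (- e) \<cdot>\<^sub>m 1\<^sub>m n) es) = mprod n (map (\<lambda>e. C + (- e) \<cdot>\<^sub>m 1\<^sub>m n) es) * X" for es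
  proof (induct es)
    case Nil then show ?case using X by simp
  next
    case (Cons e es)
    have s1: "mprod n (map (\<lambda>e. A + (- e) \<cdot>\<^sub>m 1\<^sub>m n) es) \<in> carrier_mat n n"
      by (rule mprod_carrier) (use A in auto)
    have s2: "mprod n (map (\<lambda>e. C + (- e) \<cdot>\<^sub>m 1\<^sub>m n) es) \<in> carrier_mat n n"
      by (rule mprod_carrier) (use Cc in auto)
    have "X * mprod n (map (\<lambda>e. A + (- e) \<cdot>\<^sub>m 1\<^sub>m n) (e # es)) = X * (A + (- e) \<cdot>\<^sub>m 1\<^sub>m n) * mprod n (map (\<lambda>e. A + (- e) \<cdot>\<^sub>m 1\<^sub>m n) es)"
      using X A s1 by (simp add: assoc_mult_mat[of _ n n _ n _ n])
    also have "\<dots> = (C + (- e) \<cdot>\<^sub>m 1\<^sub>m n) * (X * mprod n (map (\<lambda>e. A + (- e) \<cdot>\<^sub>m 1\<^sub>m n) es))"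
      using X Cc s1 by (simp add: step assoc_mult_mat[of _ n n _ n _ n])
    also have "\<dots> = mprod n (map (\<lambda>e. C + (- e) \<cdot>\<^sub>m 1\<^sub>m n) (e # es)) * X"
      using X Cc s2 Cons by (simp add: assoc_mult_mat[of _ n n _ n _ n])
    finally show ?case .
  qed
  obtain es where eig: "\<forall>e\<in>set es. eigenvalue A e"
    and ch: "mprod n (map (\<lambda>e. A + (- e) \<cdot>\<^sub>m 1\<^sub>m n) es) = 0\<^sub>m n n"
    using CH_complex[OF A] by blast
  have "mprod n (map (\<lambda>e. C + (- e) \<cdot>\<^sub>m 1\<^sub>m n) es) * X = 0\<^sub>m n n"
    using comm[of es] ch X by simp
  then show ?thesis using mprod_factor_inj[OF A reg eig X] by (simp add: C_def)
qed
inductive_set palg :: "nat \<Rightarrow> 'a::field mat \<Rightarrow> 'a mat set" for N M where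
  one: "1\<^sub>m N \<in> palg N M"
| add: "R \<in> palg N M \<Longrightarrow> R' \<in> palg N M \<Longrightarrow> R + R' \<in> palg N M"
| smult: "R \<in> palg N M \<Longrightarrow> c \<cdot>\<^sub>m R \<in> palg N M"
| mulM: "R \<in> palg N M \<Longrightarrow> M * R \<in> palg N M"

lemma palg_carrier: assumes M: "M \<in> carrier_mat N N" and R: "R \<in> palg N M" shows "R \<in> carrier_mat N N"
  using R by induct (use M in auto)

lemma palg_zero: "0\<^sub>m N N \<in> palg N M"
proof -
  have "0 \<cdot>\<^sub>m 1\<^sub>m N \<in> palg N M" by (intro palg.smult palg.one)
  moreover have "0 \<cdot>\<^sub>m 1\<^sub>m N = (0\<^sub>m N N :: 'a mat)" by (rule eq_matI) auto
  ultimately show ?thesis by simp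
qed

lemma expansion:
  fixes M :: "'a::field mat"
  assumes M: "M \<in> carrier_mat N N"
  shows "\<exists>R\<in>palg N M. mprod N (map (\<lambda>e. M + (- e) \<cdot>\<^sub>m 1\<^sub>m N) es) = M * R + (\<Prod>e\<leftarrow>es. - e) \<cdot>\<^sub>m 1\<^sub>m N"
proof (induct es)
  case Nil
  have "M * 0\<^sub>m N N + 1 \<cdot>\<^sub>m 1\<^sub>m N = (1\<^sub>m N :: 'a mat)"
    using M by (simp add: one_smult_mat')
  then show ?case by (intro bexI[of _ "0\<^sub>m N N"]) (simp_all add: palg_zero)
next
  case (Cons e es)
  then obtain R where R: "R \<in> palg N M"
    and eq: "mprod N (map (\<lambda>e. M + (- e) \<cdot>\<^sub>m 1\<^sub>m N) es) = M * R + (\<Prod>e\<leftarrow>es. - e) \<cdot>\<^sub>m 1\<^sub>m N" by blast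
  define c where "c = (\<Prod>e\<leftarrow>es. - e)"
  define d where "d = - e"
  define X where "X = M * R + c \<cdot>\<^sub>m 1\<^sub>m N"
  have Rc: "R \<in> carrier_mat N N" using palg_carrier[OF M R] .
  have Xc: "X \<in> carrier_mat N N" using M Rc by (simp add: X_def)
  have 1: "(M + d \<cdot>\<^sub>m 1\<^sub>m N) * X = M * X + d \<cdot>\<^sub>m X"
    using M Xc by (simp add: add_mult_distrib_mat[of _ N N] mult_smult_assoc_mat[of _ N N])
  have 2: "M * (X + d \<cdot>\<^sub>m R) = M * X + d \<cdot>\<^sub>m (M * R)"
    using M Xc Rc by (simp add: mult_add_distrib_mat[of _ N N] mult_smult_distrib[of _ N N])
  have 3: "d \<cdot>\<^sub>m X = d \<cdot>\<^sub>m (M * R) + (d * c) \<cdot>\<^sub>m 1\<^sub>m N"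
    using M Rc unfolding X_def by (simp add: add_smult_distrib_left_mat[of _ N N] smult_smult_mat')
  have "mprod N (map (\<lambda>e. M + (- e) \<cdot>\<^sub>m 1\<^sub>m N) (e # es)) = (M + d \<cdot>\<^sub>m 1\<^sub>m N) * X"
    using eq by (simp add: X_def c_def d_def)
  also have "\<dots> = M * X + (d \<cdot>\<^sub>m (M * R) + (d * c) \<cdot>\<^sub>m 1\<^sub>m N)" using 1 3 by simp
  also have "\<dots> = M * X + d \<cdot>\<^sub>m (M * R) + (d * c) \<cdot>\<^sub>m 1\<^sub>m N"
    using M Xc Rc by (simp add: assoc_add_mat[of _ N N])
  also have "\<dots> = M * (X + d \<cdot>\<^sub>m R) + (\<Prod>e\<leftarrow>(e # es). - e) \<cdot>\<^sub>m 1\<^sub>m N"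
    using 2 by (simp add: c_def d_def)
  finally show ?case
    using R by (intro bexI[of _ "X + d \<cdot>\<^sub>m R"]) (auto simp: X_def intro!: palg.intros)
qed

lemma inv_from_annih:
  fixes M R :: "'a::field mat"
  assumes M: "M \<in> carrier_mat N N" and R: "R \<in> carrier_mat N N"
    and eq: "M * R + c \<cdot>\<^sub>m 1\<^sub>m N = 0\<^sub>m N N" and c: "c \<noteq> 0"
  shows "M * ((- 1 / c) \<cdot>\<^sub>m R) = 1\<^sub>m N"
proof -
  have "M * ((- 1 / c) \<cdot>\<^sub>m R) = (- 1 / c) \<cdot>\<^sub>m (M * R)"
    using M R by (simp add: mult_smult_distrib[of _ N N])
  also have "\<dots> = 1\<^sub>m N"
  proof (rule eq_matI)
    fix i j assume ij: "i < dim_row (1\<^sub>m N :: 'a mat)" "j < dim_col (1\<^sub>m N :: 'a mat)"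
    have "(M * R + c \<cdot>\<^sub>m 1\<^sub>m N) $$ (i,j) = 0\<^sub>m N N $$ (i,j)" using eq by simp
    then have "(M * R) $$ (i,j) = - c * (if i = j then 1 else 0)" using ij M R
      by (simp add: eq_neg_iff_add_eq_0)
    then show "((- 1 / c) \<cdot>\<^sub>m (M * R)) $$ (i,j) = 1\<^sub>m N $$ (i,j)" using ij M R c by simp
  qed (use M R in auto)
  finally show ?thesis .
qed

lemma char_matrix_0: "M \<in> carrier_mat N N \<Longrightarrow> char_matrix M 0 = (M :: 'a::field mat)"
  by (rule eq_matI) (auto simp: char_matrix_def)

lemma prod_neg_nonzero:
  fixes M :: "'a::field mat"
  assumes M: "M \<in> carrier_mat N N" and d: "det M \<noteq> 0" and eig: "\<forall>e\<in>set es. eigenvalue M e"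
  shows "(\<Prod>e\<leftarrow>es. - e) \<noteq> 0"
proof
  assume "(\<Prod>e\<leftarrow>es. - e) = 0"
  then have "0 \<in> set es" by (auto simp: prod_list_zero_iff)
  then have "eigenvalue M 0" using eig by auto
  then have "det M = 0" using eigenvalue_det[OF M] by (simp add: char_matrix_0[OF M])
  with d show False by simp
qed

context kalg
begin

lemma palg_sub: assumes M: "M \<in> kron_span n S" and R: "R \<in> palg (n*n) M"
  shows "R \<in> kron_span n S"
  using R by induct (auto intro: kspan_one kspan_add[OF S] kspan_smult[OF S] kspan_mult M)

end

lemma inv_complex:
  fixes S :: "complex mat set"
  assumes K: "kalg n S" and MT: "M \<in> kron_span n S" and d: "det M \<noteq> 0"
  shows "\<exists>R\<in>kron_span n S. M * R = 1\<^sub>m (n*n)"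
proof -
  interpret kalg n S by (rule K)
  have M: "M \<in> carrier_mat (n*n) (n*n)" using kspan_carrier[OF S MT] .
  obtain es where eig: "\<forall>e\<in>set es. eigenvalue M e"
    and ch: "mprod (n*n) (map (\<lambda>e. M + (- e) \<cdot>\<^sub>m 1\<^sub>m (n*n)) es) = 0\<^sub>m (n*n) (n*n)"
    using CH_complex[OF M] by blast
  obtain R where R: "R \<in> palg (n*n) M"
    and ex: "mprod (n*n) (map (\<lambda>e. M + (- e) \<cdot>\<^sub>m 1\<^sub>m (n*n)) es) = M * R + (\<Prod>e\<leftarrow>es. - e) \<cdot>\<^sub>m 1\<^sub>m (n*n)"
    using expansion[OF M] by blast
  have c: "(\<Prod>e\<leftarrow>es. - e) \<noteq> 0" using prod_neg_nonzero[OF M d eig] .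
  have Rc: "R \<in> carrier_mat (n*n) (n*n)" using palg_carrier[OF M R] .
  have "M * ((- 1 / (\<Prod>e\<leftarrow>es. - e)) \<cdot>\<^sub>m R) = 1\<^sub>m (n*n)"
    using inv_from_annih[OF M Rc _ c] ch ex by simp
  moreover have "(- 1 / (\<Prod>e\<leftarrow>es. - e)) \<cdot>\<^sub>m R \<in> kron_span n S"
    using palg_sub[OF MT R] by (rule kspan_smult[OF S])
  ultimately show ?thesis by blast
qed

lemma palg_re_im:
  fixes M :: "real mat"
  assumes M: "M \<in> carrier_mat N N"
  shows "R \<in> palg N (map_mat complex_of_real M) \<Longrightarrow> map_mat Re R \<in> palg N M \<and> map_mat Im R \<in> palg N M"
proof (induct R rule: palg.induct)
  case one
  have "map_mat Re (1\<^sub>m N) = 1\<^sub>m N" by (rule eq_matI) auto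
  moreover have "map_mat Im (1\<^sub>m N) = 0\<^sub>m N N" by (rule eq_matI) auto
  ultimately show ?case by (simp add: palg.one palg_zero)
next
  case (add R R')
  have Mc: "map_mat complex_of_real M \<in> carrier_mat N N" using M by simp
  have c: "R \<in> carrier_mat N N" "R' \<in> carrier_mat N N"
    using palg_carrier[OF Mc add(1)] palg_carrier[OF Mc add(3)] .
  have "map_mat Re (R + R') = map_mat Re R + map_mat Re R'" by (rule eq_matI) (use c in auto)
  moreover have "map_mat Im (R + R') = map_mat Im R + map_mat Im R'" by (rule eq_matI) (use c in auto)
  ultimately show ?case using add by (simp add: palg.add)
next
  case (smult R c)
  have "map_mat Re (c \<cdot>\<^sub>m R) = Re c \<cdot>\<^sub>m map_mat Re R + (- Im c) \<cdot>\<^sub>m map_mat Im R"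
    by (rule eq_matI) auto
  moreover have "map_mat Im (c \<cdot>\<^sub>m R) = Im c \<cdot>\<^sub>m map_mat Re R + Re c \<cdot>\<^sub>m map_mat Im R"
    by (rule eq_matI) auto
  ultimately show ?case using smult by (simp add: palg.add palg.smult)
next
  case (mulM R)
  have Mc: "map_mat complex_of_real M \<in> carrier_mat N N" using M by simp
  have c: "R \<in> carrier_mat N N" using palg_carrier[OF Mc mulM(1)] .
  have "map_mat Re (map_mat complex_of_real M * R) = M * map_mat Re R"
    by (rule eq_matI) (use c M in \<open>auto simp: scalar_prod_def Re_sum\<close>)
  moreover have "map_mat Im (map_mat complex_of_real M * R) = M * map_mat Im R"
    by (rule eq_matI) (use c M in \<open>auto simp: scalar_prod_def Im_sum\<close>)
  ultimately show ?case using mulM by (simp add: palg.mulM)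
qed
lemma inv_real:
  fixes S :: "real mat set"
  assumes K: "kalg n S" and MT: "M \<in> kron_span n S" and d: "det M \<noteq> 0"
  shows "\<exists>R\<in>kron_span n S. M * R = 1\<^sub>m (n*n)"
proof -
  interpret kalg n S by (rule K)
  have M: "M \<in> carrier_mat (n*n) (n*n)" using kspan_carrier[OF S MT] .
  define Mc where "Mc = map_mat complex_of_real M"
  have Mcc: "Mc \<in> carrier_mat (n*n) (n*n)" using M by (simp add: Mc_def)
  have dc: "det Mc \<noteq> 0" using d by (simp add: Mc_def of_real_hom.hom_det)
  obtain es where eig: "\<forall>e\<in>set es. eigenvalue Mc e"
    and ch: "mprod (n*n) (map (\<lambda>e. Mc + (- e) \<cdot>\<^sub>m 1\<^sub>m (n*n)) es) = 0\<^sub>m (n*n) (n*n)"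
    using CH_complex[OF Mcc] by blast
  obtain R where R: "R \<in> palg (n*n) Mc"
    and ex: "mprod (n*n) (map (\<lambda>e. Mc + (- e) \<cdot>\<^sub>m 1\<^sub>m (n*n)) es) = Mc * R + (\<Prod>e\<leftarrow>es. - e) \<cdot>\<^sub>m 1\<^sub>m (n*n)"
    using expansion[OF Mcc] by blast
  define c where "c = (\<Prod>e\<leftarrow>es. - e)"
  have c: "c \<noteq> 0" using prod_neg_nonzero[OF Mcc dc eig] by (simp add: c_def)
  have Rc: "R \<in> carrier_mat (n*n) (n*n)" using palg_carrier[OF Mcc R] .
  have eq: "Mc * R + c \<cdot>\<^sub>m 1\<^sub>m (n*n) = 0\<^sub>m (n*n) (n*n)" using ch ex by (simp add: c_def)
  have RI: "map_mat Re R \<in> palg (n*n) M \<and> map_mat Im R \<in> palg (n*n) M"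
    using palg_re_im[OF M] R by (simp add: Mc_def)
  have entry: "(Mc * R) $$ (i,j) + c * (if i = j then 1 else 0) = 0" if ij: "i < n*n" "j < n*n" for i j
  proof -
    have "(Mc * R + c \<cdot>\<^sub>m 1\<^sub>m (n*n)) $$ (i,j) = 0\<^sub>m (n*n) (n*n) $$ (i,j)" using eq by simp
    then show ?thesis using ij Mcc Rc by simp
  qed
  have eqRe: "M * map_mat Re R + Re c \<cdot>\<^sub>m 1\<^sub>m (n*n) = 0\<^sub>m (n*n) (n*n)"
  proof (rule eq_matI)
    fix i j assume ij: "i < dim_row (0\<^sub>m (n*n) (n*n) :: real mat)" "j < dim_col (0\<^sub>m (n*n) (n*n) :: real mat)"
    then have ij': "i < n*n" "j < n*n" by auto
    have "Re ((Mc * R) $$ (i,j) + c * (if i = j then 1 else 0)) = 0" using entry[OF ij'] by simp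
    then show "(M * map_mat Re R + Re c \<cdot>\<^sub>m 1\<^sub>m (n*n)) $$ (i,j) = 0\<^sub>m (n*n) (n*n) $$ (i,j)"
      using ij' M Rc by (auto simp: Mc_def scalar_prod_def Re_sum split: if_splits)
  qed (use M Rc in auto)
  have eqIm: "M * map_mat Im R + Im c \<cdot>\<^sub>m 1\<^sub>m (n*n) = 0\<^sub>m (n*n) (n*n)"
  proof (rule eq_matI)
    fix i j assume ij: "i < dim_row (0\<^sub>m (n*n) (n*n) :: real mat)" "j < dim_col (0\<^sub>m (n*n) (n*n) :: real mat)"
    then have ij': "i < n*n" "j < n*n" by auto
    have "Im ((Mc * R) $$ (i,j) + c * (if i = j then 1 else 0)) = 0" using entry[OF ij'] by simp
    then show "(M * map_mat Im R + Im c \<cdot>\<^sub>m 1\<^sub>m (n*n)) $$ (i,j) = 0\<^sub>m (n*n) (n*n) $$ (i,j)"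
      using ij' M Rc by (auto simp: Mc_def scalar_prod_def Im_sum split: if_splits)
  qed (use M Rc in auto)
  show ?thesis
  proof (cases "Re c = 0")
    case False
    have "M * ((- 1 / Re c) \<cdot>\<^sub>m map_mat Re R) = 1\<^sub>m (n*n)"
      by (rule inv_from_annih[OF M _ eqRe False]) (use Rc in simp)
    moreover have "(- 1 / Re c) \<cdot>\<^sub>m map_mat Re R \<in> kron_span n S"
      using palg_sub[OF MT] RI by (intro kspan_smult[OF S]) auto
    ultimately show ?thesis by blast
  next
    case True
    then have ic: "Im c \<noteq> 0" using c complex_eq_iff[of c 0] by auto
    have "M * ((- 1 / Im c) \<cdot>\<^sub>m map_mat Im R) = 1\<^sub>m (n*n)"
      by (rule inv_from_annih[OF M _ eqIm ic]) (use Rc in simp)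
    moreover have "(- 1 / Im c) \<cdot>\<^sub>m map_mat Im R \<in> kron_span n S"
      using palg_sub[OF MT] RI by (intro kspan_smult[OF S]) auto
    ultimately show ?thesis by blast
  qed
qed

lemma lyap_inj_real:
  fixes A X :: "real mat"
  assumes A: "A \<in> carrier_mat n n" and reg: "lyap_regular (map_mat complex_of_real A)"
    and X: "X \<in> carrier_mat n n" and L: "lyap A X = 0\<^sub>m n n"
  shows "X = 0\<^sub>m n n"
proof -
  define Ac where "Ac = map_mat complex_of_real A"
  define Xc where "Xc = map_mat complex_of_real X"
  have Acc: "Ac \<in> carrier_mat n n" and Xcc: "Xc \<in> carrier_mat n n" using A X by (auto simp: Ac_def Xc_def)
  have madj: "madj Ac = map_mat complex_of_real (madj A)"
    by (rule eq_matI) (use A in \<open>auto simp: Ac_def\<close>)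
  have "map_mat complex_of_real (lyap A X) = map_mat complex_of_real (X * A) + map_mat complex_of_real (madj A * X)"
    by (rule eq_matI) (use A X in \<open>auto simp: lyap_def\<close>)
  also have "\<dots> = lyap Ac Xc"
    unfolding lyap_def madj Ac_def Xc_def
    using A X by (simp add: of_real_hom.mat_hom_mult[of _ n n _ n] madj[unfolded Ac_def])
  finally have "lyap Ac Xc = map_mat complex_of_real (0\<^sub>m n n)" using L by simp
  also have "map_mat complex_of_real (0\<^sub>m n n) = (0\<^sub>m n n :: complex mat)" by (rule eq_matI) auto
  finally have "Xc = 0\<^sub>m n n" using lyap_inj_complex[OF Acc _ Xcc] reg by (simp add: Ac_def)
  then have "map_mat complex_of_real X = map_mat complex_of_real (0\<^sub>m n n)"
    by (simp add: Xc_def \<open>map_mat complex_of_real (0\<^sub>m n n) = 0\<^sub>m n n\<close>)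
  then show ?thesis by (rule of_real_hom.mat_hom_inj)
qed

lemma kalg_bicomm: "A \<in> carrier_mat n n \<Longrightarrow> kalg n (bicommutant n (madj (A::'a::conjugatable_field mat)))"
  by (unfold_locales, auto simp: bicomm_carrier bicomm_one bicomm_mult)

theorem lemma4p1:
  shows "(\<forall>(n::nat) (A::complex mat) B. A \<in> carrier_mat n n \<and> lyap_regular A \<and> B \<in> bicommutant n A
            \<longrightarrow> matricization_in_span n A B)
       \<and> (\<forall>(n::nat) (A::real mat) B. A \<in> carrier_mat n n \<and> lyap_regular (map_mat complex_of_real A)
            \<and> B \<in> bicommutant n A \<longrightarrow> matricization_in_span n A B)"
proof (intro conjI allI impI; elim conjE)
  fix n :: nat and A B :: "complex mat"
  assume A: "A \<in> carrier_mat n n" and reg: "lyap_regular A" and B: "B \<in> bicommutant n A"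
  show "matricization_in_span n A B"
    by (rule main_generic[OF A B])
      (auto intro: lyap_inj_complex[OF A reg] inv_complex[OF kalg_bicomm[OF A]])
next
  fix n :: nat and A B :: "real mat"
  assume A: "A \<in> carrier_mat n n" and reg: "lyap_regular (map_mat complex_of_real A)" and B: "B \<in> bicommutant n A"
  show "matricization_in_span n A B"
    by (rule main_generic[OF A B])
      (auto intro: lyap_inj_real[OF A reg] inv_real[OF kalg_bicomm[OF A]])
qed

end
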